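(* Let $0<\varepsilon\le 1$. Then every point of $i(0,\infty)=\{i s: s>0\}$ is an eigenvalue of $t$, and every point of $-i(0,\infty)=\{-is: s>0\}$ is an eigenvalue of $S_\varepsilon$. In particular, $t$ and $S_\varepsilon$ are unbounded operators.
   Context: Work in $L^2(\mathbb{R})$ with inner product $(f,g)=\int\overline{f(x)}g(x)\,dx$. Let $q$ be the self-adjoint multiplication operator $(qf)(x)=xf(x)$ on $D(q)=\{f\in L^2(\mathbb{R}): xf\in L^2(\mathbb{R})\}$ and $p=-i\,\frac{d}{dx}$ the self-adjoint momentum operator. Since $q$ is injective and self-adjoint, $q^{-1}$ is a (densely defined) self-adjoint operator. Define $t=q^{-1}p$ with domain $D(t)=\{f\in D(p): pf\in D(q^{-1})\}$. Let $L^2_0$ denote the subspace of even functions in $L^2(\mathbb{R})$. For $0<\varepsilon\le1$, define the operator $S_\varepsilon$ in $L^2_0$ by $D(S_\varepsilon)=\{f\in L^2_0\cap\bigcap_{n\ge0}D(t^{2n+1}) : \lim_{N\to\infty}\sum_{n=0}^N\frac{(-1)^n}{2n+1}(\sqrt{\varepsilon}\,t)^{2n+1}f \text{ exists in norm}\}$, $S_\varepsilon f=-\frac{1}{\sqrt\varepsilon}\sum_{n=0}^\infty\frac{(-1)^n}{2n+1}(\sqrt\varepsilon\,t)^{2n+1}f$ (formally $S_\varepsilon=-\varepsilon^{-1/2}\arctan(\sqrt\varepsilon\, t)$). *)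

theory Defs
  imports "HOL-Analysis.Analysis"
begin

text \<open>Elements of L^2(R) are represented by (Borel measurable) functions real => complex;
  operators are represented by their graphs, as relations between representatives
  (all relations below are invariant under a.e. equality).\<close>

definition L2 :: "(real \<Rightarrow> complex) \<Rightarrow> bool" where
  "L2 f \<longleftrightarrow> f \<in> borel_measurable lborel \<and> integrable lborel (\<lambda>x. (cmod (f x))\<^sup>2)"

definition L2_norm :: "(real \<Rightarrow> complex) \<Rightarrow> real" where
  "L2_norm f = sqrt (LINT x|lborel. (cmod (f x))\<^sup>2)"

definition ae_eq :: "(real \<Rightarrow> complex) \<Rightarrow> (real \<Rightarrow> complex) \<Rightarrow> bool" where
  "ae_eq f g \<longleftrightarrow> (AE x in lborel. f x = g x)"

definition vderiv :: "(real \<Rightarrow> complex) \<Rightarrow> real \<Rightarrow> complex" where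
  "vderiv g = (\<lambda>x. vector_derivative g (at x))"

definition test_function :: "(real \<Rightarrow> complex) \<Rightarrow> bool" where
  "test_function \<phi> \<longleftrightarrow> (\<forall>n x. (vderiv ^^ n) \<phi> differentiable (at x)) \<and> bounded {x. \<phi> x \<noteq> 0}"

text \<open>Self-adjoint momentum p = -i d/dx, domain H^1(R) (weak derivative in L^2).\<close>
definition p_op :: "(real \<Rightarrow> complex) \<Rightarrow> (real \<Rightarrow> complex) \<Rightarrow> bool" where
  "p_op f g \<longleftrightarrow> L2 f \<and> L2 g \<and>
     (\<forall>\<phi>. test_function \<phi> \<longrightarrow>
        (LINT x|lborel. f x * vderiv \<phi> x) = - (LINT x|lborel. (\<i> * g x) * \<phi> x))"

definition qinv_op :: "(real \<Rightarrow> complex) \<Rightarrow> (real \<Rightarrow> complex) \<Rightarrow> bool" where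
  "qinv_op g h \<longleftrightarrow> L2 g \<and> L2 h \<and> (AE x in lborel. h x = g x / complex_of_real x)"

definition t_op :: "(real \<Rightarrow> complex) \<Rightarrow> (real \<Rightarrow> complex) \<Rightarrow> bool" where
  "t_op f h \<longleftrightarrow> (\<exists>g. p_op f g \<and> qinv_op g h)"

fun t_pow :: "nat \<Rightarrow> (real \<Rightarrow> complex) \<Rightarrow> (real \<Rightarrow> complex) \<Rightarrow> bool" where
  "t_pow 0 f h \<longleftrightarrow> L2 f \<and> ae_eq f h"
| "t_pow (Suc n) f h \<longleftrightarrow> (\<exists>g. t_pow n f g \<and> t_op g h)"

definition even_fn :: "(real \<Rightarrow> complex) \<Rightarrow> bool" where
  "even_fn f \<longleftrightarrow> (AE x in lborel. f (- x) = f x)"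

text \<open>S_eps = - eps^{-1/2} arctan(sqrt eps t) on the even subspace L^2_0, defined by the
  norm-convergent series.\<close>
definition S_op :: "real \<Rightarrow> (real \<Rightarrow> complex) \<Rightarrow> (real \<Rightarrow> complex) \<Rightarrow> bool" where
  "S_op \<epsilon> f g \<longleftrightarrow> L2 f \<and> even_fn f \<and>
     (\<exists>u h. (\<forall>n. t_pow (2*n+1) f (u n)) \<and> L2 h \<and>
        (\<lambda>N. L2_norm (\<lambda>x. (\<Sum>n\<le>N. complex_of_real ((-1)^n / (2*n+1) * sqrt \<epsilon> ^ (2*n+1)) * u n x) - h x))
          \<longlonglongrightarrow> 0 \<and>
        L2 g \<and> ae_eq g (\<lambda>x. - complex_of_real (1 / sqrt \<epsilon>) * h x))"

definition is_eigenvalue :: "((real \<Rightarrow> complex) \<Rightarrow> (real \<Rightarrow> complex) \<Rightarrow> bool) \<Rightarrow> complex \<Rightarrow> bool" where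
  "is_eigenvalue T c \<longleftrightarrow> (\<exists>f. \<not> ae_eq f (\<lambda>_. 0) \<and> T f (\<lambda>x. c * f x))"

definition bounded_op :: "((real \<Rightarrow> complex) \<Rightarrow> (real \<Rightarrow> complex) \<Rightarrow> bool) \<Rightarrow> bool" where
  "bounded_op T \<longleftrightarrow> (\<exists>C. \<forall>f g. T f g \<longrightarrow> L2_norm g \<le> C * L2_norm f)"

end

theory Submission imports Defs "HOL-Probability.Distributions" begin

lemma gauss_nd:
  fixes a :: real assumes a: "a > 0"
  defines "\<sigma> \<equiv> sqrt (1/(2*a))"
  shows "exp (-(a*x^2)) = sqrt (2*pi*\<sigma>^2) * normal_density 0 \<sigma> x"
proof -
  have s2: "\<sigma>^2 = 1/(2*a)" unfolding \<sigma>_def using a by simp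
  have "sqrt (2*pi*\<sigma>^2) > 0" using a s2 by simp
  moreover have "\<sigma> > 0" unfolding \<sigma>_def using a by simp
  ultimately show ?thesis unfolding normal_density_def s2 using a
    by (simp add: field_simps)
qed

lemma gauss_integrable:
  fixes a :: real assumes a: "a > 0"
  shows "integrable lborel (\<lambda>x. exp (-(a*x^2)) * x^k)"
proof -
  have "integrable lborel (\<lambda>x. sqrt (2*pi*(sqrt (1/(2*a)))^2) * (normal_density 0 (sqrt (1/(2*a))) x * (x - 0)^k))"
    using a by (intro integrable_mult_right integrable_normal_moment) simp
  then show ?thesis by (simp add: gauss_nd[OF a] mult.assoc)
qed

lemma gauss_integral_pos:
  fixes a :: real assumes a: "a > 0"
  shows "(LINT x|lborel. exp (-(a*x^2))) > 0"
proof -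
  have "(LINT x|lborel. exp (-(a*x^2))) = sqrt (2*pi*(sqrt (1/(2*a)))^2) * (LINT x|lborel. normal_density 0 (sqrt (1/(2*a))) x)"
    by (simp add: gauss_nd[OF a])
  also have "\<dots> > 0" using a by simp
  finally show ?thesis .
qed

definition G :: "real \<Rightarrow> real \<Rightarrow> complex" where
  "G a x = complex_of_real (exp (-(a*x^2)/2))"

lemma cmod_G_sq: "(cmod (c * G a x))^2 = (cmod c)^2 * exp (-(a*x^2))"
proof -
  have "(exp (-(a*x^2)/2))^2 = exp (-(a*x^2))"
    by (simp add: power2_eq_square exp_add[symmetric])
  then show ?thesis by (simp add: G_def norm_mult power_mult_distrib)
qed

lemma L2_G:
  assumes a: "a > 0"
  shows "L2 (\<lambda>x. c * G a x)" "L2 (\<lambda>x. c * of_real x * G a x)"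
proof -
  have m: "(\<lambda>x. c * G a x) \<in> borel_measurable lborel" "(\<lambda>x. c * of_real x * G a x) \<in> borel_measurable lborel"
    unfolding G_def by (auto intro!: borel_measurable_continuous_onI continuous_intros)
  have "integrable lborel (\<lambda>x. (cmod c)^2 * (exp (-(a*x^2)) * x^0))"
    by (intro integrable_mult_right gauss_integrable[OF a])
  then show "L2 (\<lambda>x. c * G a x)" unfolding L2_def using m by (simp add: cmod_G_sq)
  have "integrable lborel (\<lambda>x. (cmod c)^2 * (exp (-(a*x^2)) * x^2))"
    by (intro integrable_mult_right gauss_integrable[OF a])
  moreover have "(cmod (c * of_real x * G a x))^2 = (cmod c)^2 * (exp (-(a*x^2)) * x^2)" for x
    using cmod_G_sq[of "c * of_real x" a x] by (simp add: norm_mult power_mult_distrib)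
  ultimately show "L2 (\<lambda>x. c * of_real x * G a x)" unfolding L2_def using m by simp
qed

lemma L2_norm_scale: "L2_norm (\<lambda>x. c * f x) = cmod c * L2_norm f"
  unfolding L2_norm_def by (simp add: norm_mult power_mult_distrib real_sqrt_mult)

lemma L2_norm_G_pos: "a > 0 \<Longrightarrow> L2_norm (G a) > 0"
  using gauss_integral_pos[of a] cmod_G_sq[of 1 a] unfolding L2_norm_def by simp

lemma test_diff:
  assumes "test_function \<phi>"
  shows "\<And>x. (\<phi> has_vector_derivative vderiv \<phi> x) (at x)"
    and "continuous_on UNIV \<phi>" and "continuous_on UNIV (vderiv \<phi>)"
proof -
  have d0: "\<And>x. \<phi> differentiable (at x)" using assms unfolding test_function_def
    by (metis funpow_0)
  have d1: "\<And>x. vderiv \<phi> differentiable (at x)" using assms unfolding test_function_def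
    by (metis funpow_0 funpow_Suc_right o_apply)
  show "\<And>x. (\<phi> has_vector_derivative vderiv \<phi> x) (at x)"
    unfolding vderiv_def using d0 vector_derivative_works by blast
  show "continuous_on UNIV \<phi>" using d0
    by (simp add: continuous_at_imp_continuous_on differentiable_imp_continuous_within)
  show "continuous_on UNIV (vderiv \<phi>)" using d1
    by (simp add: continuous_at_imp_continuous_on differentiable_imp_continuous_within)
qed

lemma test_supp:
  assumes "test_function \<phi>"
  obtains R where "R > 0" "\<And>x. R < \<bar>x\<bar> \<Longrightarrow> \<phi> x = 0" "\<And>x. R < \<bar>x\<bar> \<Longrightarrow> vderiv \<phi> x = 0"
proof -
  obtain R where R: "\<And>x. \<phi> x \<noteq> 0 \<Longrightarrow> \<bar>x\<bar> \<le> R" "R > 0"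
    using assms unfolding test_function_def bounded_pos by auto
  have z: "\<And>x. R < \<bar>x\<bar> \<Longrightarrow> \<phi> x = 0" using R by force
  have "vderiv \<phi> x = 0" if "R < \<bar>x\<bar>" for x
  proof -
    have "((\<lambda>_. 0::complex) has_vector_derivative 0) (at x)" by simp
    then have "(\<phi> has_vector_derivative 0) (at x)"
      apply (rule has_vector_derivative_transform_within_open[where S="{y. R < \<bar>y\<bar>}"])
      using that z by (auto intro!: open_Collect_less continuous_intros)
    then show ?thesis unfolding vderiv_def by (rule vector_derivative_at)
  qed
  then show ?thesis using that R z by blast
qed

lemma ibp:
  fixes f f' :: "real \<Rightarrow> complex"
  assumes df: "\<And>x. (f has_vector_derivative f' x) (at x)"
    and cf: "continuous_on UNIV f" and cf': "continuous_on UNIV f'"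
    and tf: "test_function \<phi>"
  shows "(LINT x|lborel. f x * vderiv \<phi> x) = - (LINT x|lborel. f' x * \<phi> x)"
proof -
  note td = test_diff[OF tf]
  obtain R where R: "R > 0" "\<And>x. R < \<bar>x\<bar> \<Longrightarrow> \<phi> x = 0" "\<And>x. R < \<bar>x\<bar> \<Longrightarrow> vderiv \<phi> x = 0"
    using test_supp[OF tf] by blast
  define S where "S = {-(R+1)..R+1}"
  define D where "D = (\<lambda>x. f x * vderiv \<phi> x + f' x * \<phi> x)"
  have out: "x \<notin> S \<Longrightarrow> \<phi> x = 0 \<and> vderiv \<phi> x = 0" for x
    using R unfolding S_def by auto
  have "(D has_integral (f (R+1) * \<phi> (R+1) - f (-(R+1)) * \<phi> (-(R+1)))) S"
    unfolding S_def D_def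
    apply (rule fundamental_theorem_of_calculus)
    using R(1) apply simp
    apply (rule has_vector_derivative_at_within)
    using has_vector_derivative_mult[OF df td(1)] by simp
  moreover have "\<phi> (R+1) = 0" "\<phi> (-(R+1)) = 0" using R by auto
  ultimately have "(D has_integral 0) S" by simp
  then have hi0: "(D has_integral 0) UNIV"
    by (rule has_integral_on_superset) (auto simp: D_def out)
  have i1: "integrable lborel (\<lambda>x. f x * vderiv \<phi> x)"
  proof -
    have "integrable lborel (\<lambda>x. indicator S x *\<^sub>R (f x * vderiv \<phi> x))"
      unfolding S_def
      by (rule borel_integrable_compact) (auto intro!: continuous_intros continuous_on_subset[OF cf] continuous_on_subset[OF td(3)])
    moreover have "(\<lambda>x. indicator S x *\<^sub>R (f x * vderiv \<phi> x)) = (\<lambda>x. f x * vderiv \<phi> x)"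
      using out by (auto simp: indicator_def)
    ultimately show ?thesis by simp
  qed
  have i2: "integrable lborel (\<lambda>x. f' x * \<phi> x)"
  proof -
    have "integrable lborel (\<lambda>x. indicator S x *\<^sub>R (f' x * \<phi> x))"
      unfolding S_def
      by (rule borel_integrable_compact) (auto intro!: continuous_intros continuous_on_subset[OF cf'] continuous_on_subset[OF td(2)])
    moreover have "(\<lambda>x. indicator S x *\<^sub>R (f' x * \<phi> x)) = (\<lambda>x. f' x * \<phi> x)"
      using out by (auto simp: indicator_def)
    ultimately show ?thesis by simp
  qed
  have "integrable lborel D" unfolding D_def using i1 i2 by simp
  from has_integral_integral_lborel[OF this] hi0 have "integral\<^sup>L lborel D = 0"
    using has_integral_unique by blast
  then show ?thesis unfolding D_def using i1 i2 by (simp add: eq_neg_iff_add_eq_0)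
qed

lemma G_deriv: "((\<lambda>x. c * G a x) has_vector_derivative (c * of_real (-(a*x)) * G a x)) (at x)"
proof -
  have "((\<lambda>x. exp (-(a*x^2)/2)) has_real_derivative (exp (-(a*x^2)/2) * (-(a*x)))) (at x)"
    by (auto intro!: derivative_eq_intros simp: field_simps)
  from has_vector_derivative_mult_right[OF has_vector_derivative_of_real[OF this], of c]
  show ?thesis unfolding G_def by (simp add: mult_ac)
qed

lemma t_op_G:
  assumes a: "a > 0"
  shows "t_op (\<lambda>x. c * G a x) (\<lambda>x. c * (\<i> * of_real a) * G a x)"
proof -
  define g where "g = (\<lambda>x. (\<i> * of_real a * c) * of_real x * G a x)"
  have "p_op (\<lambda>x. c * G a x) g"
    unfolding p_op_def
  proof (intro conjI allI impI)
    show "L2 (\<lambda>x. c * G a x)" using L2_G[OF a] by simp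
    show "L2 g" unfolding g_def using L2_G[OF a] by simp
    fix \<phi> :: "real \<Rightarrow> complex" assume tf: "test_function \<phi>"
    have ib: "(LINT x|lborel. c * G a x * vderiv \<phi> x) = - (LINT x|lborel. (c * of_real (-(a*x)) * G a x) * \<phi> x)"
      by (rule ibp[OF G_deriv _ _ tf]) (auto simp: G_def intro!: continuous_intros)
    have eq: "(\<lambda>x. (c * of_real (-(a*x)) * G a x) * \<phi> x) = (\<lambda>x. (\<i> * g x) * \<phi> x)"
      unfolding g_def by (auto simp: mult_ac)
    show "(LINT x|lborel. c * G a x * vderiv \<phi> x) = - (LINT x|lborel. (\<i> * g x) * \<phi> x)"
      using ib unfolding eq .
  qed
  moreover have "qinv_op g (\<lambda>x. c * (\<i> * of_real a) * G a x)"
    unfolding qinv_op_def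
  proof (intro conjI)
    show "L2 g" unfolding g_def using L2_G[OF a] by simp
    show "L2 (\<lambda>x. c * (\<i> * of_real a) * G a x)" using L2_G[OF a] by simp
    show "AE x in lborel. c * (\<i> * of_real a) * G a x = g x / of_real x"
      using AE_lborel_singleton[of 0] by eventually_elim (auto simp: g_def)
  qed
  ultimately show ?thesis unfolding t_op_def by blast
qed

lemma t_pow_G:
  assumes a: "a > 0"
  shows "t_pow n (\<lambda>x. c * G a x) (\<lambda>x. c * (\<i> * of_real a)^n * G a x)"
proof (induction n)
  case 0
  then show ?case using L2_G[OF a] by (simp add: ae_eq_def)
next
  case (Suc n)
  have "t_op (\<lambda>x. (c * (\<i> * of_real a)^n) * G a x) (\<lambda>x. (c * (\<i> * of_real a)^n) * (\<i> * of_real a) * G a x)"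
    by (rule t_op_G[OF a])
  then show ?case using Suc by (auto simp: mult_ac)
qed

lemma G_nonzero: "\<not> ae_eq (G a) (\<lambda>_. 0)"
proof
  assume "ae_eq (G a) (\<lambda>_. 0)"
  then have "AE x in (lborel::real measure). False" unfolding ae_eq_def G_def by simp
  then have "ae_filter lborel = (bot :: real filter)" unfolding trivial_limit_def by simp
  then show False using ae_filter_eq_bot_iff[of "lborel :: real measure"] by simp
qed

lemma unbounded:
  assumes "\<And>s. s > 0 \<Longrightarrow> \<exists>f. T f (\<lambda>x. c s * f x) \<and> L2_norm f > 0"
    and "\<And>s. s > 0 \<Longrightarrow> cmod (c s) = s"
  shows "\<not> bounded_op T"
proof
  assume "bounded_op T"
  then obtain C where C: "\<And>f g. T f g \<Longrightarrow> L2_norm g \<le> C * L2_norm f"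
    unfolding bounded_op_def by blast
  define s where "s = \<bar>C\<bar> + 1"
  have s: "s > 0" unfolding s_def by simp
  obtain f where f: "T f (\<lambda>x. c s * f x)" "L2_norm f > 0" using assms(1)[OF s] by blast
  have "s * L2_norm f \<le> C * L2_norm f"
    using C[OF f(1)] unfolding L2_norm_scale assms(2)[OF s] .
  then have "s \<le> C" using f(2) by simp
  then show False unfolding s_def by simp
qed

lemma eig_t:
  assumes "s > 0"
  shows "\<exists>f. t_op f (\<lambda>x. (\<i> * complex_of_real s) * f x) \<and> L2_norm f > 0 \<and> \<not> ae_eq f (\<lambda>_. 0)"
proof -
  have "t_op (\<lambda>x. 1 * G s x) (\<lambda>x. 1 * (\<i> * of_real s) * G s x)" by (rule t_op_G[OF assms])
  then have "t_op (G s) (\<lambda>x. (\<i> * complex_of_real s) * G s x)" by simp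
  then show ?thesis using L2_norm_G_pos[OF assms] G_nonzero by blast
qed

lemma coef_eq:
  fixes a e r :: real
  assumes "r = sqrt e * a"
  shows "complex_of_real ((-1)^n / real (2*n+1) * sqrt e ^ (2*n+1)) * (\<i> * of_real a)^(2*n+1)
       = \<i> * complex_of_real (r^(2*n+1) / real (2*n+1))"
proof -
  have i: "\<i>^(2*n+1) = \<i> * (-1)^n"
    by (simp add: power_mult)
  have "(\<i> * complex_of_real a)^(2*n+1) = \<i> * (-1)^n * of_real (a^(2*n+1))"
    by (simp add: power_mult_distrib i)
  moreover have "((-1::complex)^n) * (-1)^n = 1"
    by (simp add: power_mult_distrib[symmetric])
  moreover have "r^(2*n+1) = sqrt e^(2*n+1) * a^(2*n+1)" using assms by (simp add: power_mult_distrib)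
  ultimately show ?thesis by (simp add: field_simps)
qed

lemma eig_S:
  assumes e: "0 < \<epsilon>" and s: "s > 0"
  shows "\<exists>f. S_op \<epsilon> f (\<lambda>x. (- \<i> * complex_of_real s) * f x) \<and> L2_norm f > 0 \<and> \<not> ae_eq f (\<lambda>_. 0)"
proof -
  define x0 where "x0 = exp (2 * sqrt \<epsilon> * s)"
  have x0: "x0 > 1" unfolding x0_def using e s by simp
  define r where "r = (x0 - 1) / (x0 + 1)"
  have r: "r > 0" unfolding r_def using x0 by simp
  define a where "a = r / sqrt \<epsilon>"
  have a: "a > 0" unfolding a_def using r e by simp
  have ra: "r = sqrt \<epsilon> * a" unfolding a_def using e by simp
  have "(\<lambda>n. 2 * r ^ (2*n+1) / of_nat (2*n+1)) sums ln x0"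
    unfolding r_def using ln_series_quadratic[of x0] x0 by simp
  then have "(\<lambda>n. (2 * r ^ (2*n+1) / of_nat (2*n+1)) / 2) sums (ln x0 / 2)"
    by (rule sums_divide)
  moreover have "ln x0 / 2 = sqrt \<epsilon> * s" unfolding x0_def by simp
  moreover have "(\<lambda>n. (2 * r ^ (2*n+1) / of_nat (2*n+1)) / 2) = (\<lambda>n. r ^ (2*n+1) / (2*n+1))"
    by (rule ext) (simp add: field_simps)
  ultimately have sm: "(\<lambda>n. r ^ (2*n+1) / (2*n+1)) sums (sqrt \<epsilon> * s)" by metis
  define P where "P = (\<lambda>N. \<Sum>n\<le>N. r ^ (2*n+1) / (2*n+1))"
  have P: "P \<longlonglongrightarrow> sqrt \<epsilon> * s"
  proof -
    have "(\<lambda>N. \<Sum>n<N. r ^ (2*n+1) / (2*n+1)) \<longlonglongrightarrow> sqrt \<epsilon> * s"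
      using sm unfolding sums_def .
    then have "(\<lambda>N. \<Sum>n<Suc N. r ^ (2*n+1) / (2*n+1)) \<longlonglongrightarrow> sqrt \<epsilon> * s"
      by (rule LIMSEQ_Suc)
    then show ?thesis unfolding P_def lessThan_Suc_atMost .
  qed
  define u where "u = (\<lambda>n x. 1 * (\<i> * complex_of_real a)^(2*n+1) * G a x)"
  define h where "h = (\<lambda>x. \<i> * complex_of_real (sqrt \<epsilon> * s) * G a x)"
  have tu: "\<forall>n. t_pow (2*n+1) (G a) (u n)"
  proof
    fix n
    have "t_pow (2*n+1) (\<lambda>x. 1 * G a x) (u n)" unfolding u_def by (rule t_pow_G[OF a])
    then show "t_pow (2*n+1) (G a) (u n)" by (simp only: mult_1_left)
  qed
  have diff0: "(\<Sum>n\<le>N. complex_of_real ((-1)^n / real (2*n+1) * sqrt \<epsilon> ^ (2*n+1)) * u n x) - h x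
      = (\<i> * complex_of_real (P N - sqrt \<epsilon> * s)) * G a x" for N x
  proof -
    have "(\<Sum>n\<le>N. complex_of_real ((-1)^n / real (2*n+1) * sqrt \<epsilon> ^ (2*n+1)) * u n x)
        = (\<Sum>n\<le>N. \<i> * complex_of_real (r^(2*n+1) / (2*n+1)) * G a x)"
      by (intro sum.cong refl) (simp only: u_def mult_1_left mult.assoc[symmetric] coef_eq[OF ra])
    also have "\<dots> = \<i> * complex_of_real (P N) * G a x"
      unfolding P_def by (simp add: sum_distrib_left sum_distrib_right)
    finally show ?thesis
      unfolding h_def by (simp add: algebra_simps)
  qed
  have diff: "(\<lambda>x. (\<Sum>n\<le>N. complex_of_real ((-1)^n / real (2*n+1) * sqrt \<epsilon> ^ (2*n+1)) * u n x) - h x)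
      = (\<lambda>x. (\<i> * complex_of_real (P N - sqrt \<epsilon> * s)) * G a x)" for N
    using diff0 by (rule ext)
  have conv: "(\<lambda>N. L2_norm (\<lambda>x. (\<Sum>n\<le>N. complex_of_real ((-1)^n / real (2*n+1) * sqrt \<epsilon> ^ (2*n+1)) * u n x) - h x)) \<longlonglongrightarrow> 0"
  proof -
    have lim: "(\<lambda>N. \<bar>P N - sqrt \<epsilon> * s\<bar> * L2_norm (G a)) \<longlonglongrightarrow> \<bar>sqrt \<epsilon> * s - sqrt \<epsilon> * s\<bar> * L2_norm (G a)"
      by (intro tendsto_intros P)
    have nrm: "L2_norm (\<lambda>x. (\<Sum>n\<le>N. complex_of_real ((-1)^n / real (2*n+1) * sqrt \<epsilon> ^ (2*n+1)) * u n x) - h x)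
       = \<bar>P N - sqrt \<epsilon> * s\<bar> * L2_norm (G a)" for N
      unfolding diff[of N] L2_norm_scale[of "\<i> * complex_of_real (P N - sqrt \<epsilon> * s)" "G a"] by (simp add: norm_mult del: of_real_diff of_real_mult)
    show ?thesis unfolding nrm using lim by simp
  qed
  have Sop: "S_op \<epsilon> (G a) (\<lambda>x. (- \<i> * complex_of_real s) * G a x)"
    unfolding S_op_def
  proof (intro conjI exI)
    show "L2 (G a)" using L2_G(1)[OF a, of 1] by simp
    show "even_fn (G a)" unfolding even_fn_def G_def by simp
    show "\<forall>n. t_pow (2*n+1) (G a) (u n)" by (rule tu)
    show "L2 h" unfolding h_def by (rule L2_G(1)[OF a])
    show "L2 (\<lambda>x. (- \<i> * complex_of_real s) * G a x)" by (rule L2_G(1)[OF a])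
    show "ae_eq (\<lambda>x. (- \<i> * complex_of_real s) * G a x) (\<lambda>x. - complex_of_real (1 / sqrt \<epsilon>) * h x)"
      unfolding ae_eq_def h_def using e by (simp add: field_simps)
  qed (rule conv)
  then show ?thesis using L2_norm_G_pos[OF a] G_nonzero by blast
qed

theorem theorem3p3:
  fixes \<epsilon> :: real
  assumes "0 < \<epsilon>" and "\<epsilon> \<le> 1"
  shows "(\<forall>s>0. is_eigenvalue t_op (\<i> * complex_of_real s))
       \<and> (\<forall>s>0. is_eigenvalue (S_op \<epsilon>) (- \<i> * complex_of_real s))
       \<and> \<not> bounded_op t_op \<and> \<not> bounded_op (S_op \<epsilon>)"
proof (intro conjI allI impI)
  show "is_eigenvalue t_op (\<i> * complex_of_real s)" if "s > 0" for s
    using eig_t[OF that] unfolding is_eigenvalue_def by blast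
  show "is_eigenvalue (S_op \<epsilon>) (- \<i> * complex_of_real s)" if "s > 0" for s
    using eig_S[OF assms(1) that] unfolding is_eigenvalue_def by blast
  show "\<not> bounded_op t_op"
    by (rule unbounded[where c="\<lambda>s. \<i> * complex_of_real s"]) (use eig_t in \<open>auto simp: norm_mult\<close>)
  show "\<not> bounded_op (S_op \<epsilon>)"
    by (rule unbounded[where c="\<lambda>s. - \<i> * complex_of_real s"]) (use eig_S[OF assms(1)] in \<open>auto simp: norm_mult\<close>)
qed

end
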